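(* Let $0<\lambda\leq\Lambda$ and let $F:\mathcal{S}(d)\to\mathbb{R}$ satisfy \[ \lambda\|N\|\leq F(M+N)-F(M)\leq \Lambda\|N\|\quad\text{for all } M,N\in\mathcal{S}(d),\ N\geq 0, \] and $F(0)=0$. Suppose the recession profile $F^*(M):=\lim_{\mu\to 0}\mu F(\mu^{-1}M)$ is convex. For $\varepsilon>0$ let $F_\varepsilon(M):=\int_{\mathbb{R}^{d^*}}F(M-Q)\eta_\varepsilon(Q)\,dQ$. Then for every $\varepsilon>0$ the recession profile $(F_\varepsilon)^*(M):=\lim_{\mu\to 0}\mu F_\varepsilon(\mu^{-1}M)$ is convex.
   Context: $\mathcal{S}(d)$ is the space of real symmetric $d\times d$ matrices, identified with $\mathbb{R}^{d^*}$, $d^*:=d(d+1)/2$; $\|\cdot\|$ is a matrix norm; $N\geq 0$ means positive semidefinite. $(\eta_\varepsilon)_{\varepsilon>0}\subset\mathcal{C}^\infty(\mathbb{R}^{d^*})$ is a family of standard mollifiers. The recession profile of an operator $G$ is $G^*(M)=\lim_{\mu\to0}\mu G(\mu^{-1}M)$. *)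

theory Defs
  imports "HOL-Analysis.Analysis"
begin

definition sym_mats :: "(real^'n^'n) set" where
  "sym_mats = {M. transpose M = M}"

definition psd :: "real^'n^'n \<Rightarrow> bool" where
  "psd N \<longleftrightarrow> (\<forall>x. 0 \<le> x \<bullet> (N *v x))"

definition is_norm_on :: "'a::real_vector set \<Rightarrow> ('a \<Rightarrow> real) \<Rightarrow> bool" where
  "is_norm_on S nrm \<longleftrightarrow>
     (\<forall>x\<in>S. 0 \<le> nrm x \<and> (nrm x = 0 \<longleftrightarrow> x = 0)) \<and>
     (\<forall>x\<in>S. \<forall>c. nrm (c *\<^sub>R x) = \<bar>c\<bar> * nrm x) \<and>
     (\<forall>x\<in>S. \<forall>y\<in>S. nrm (x + y) \<le> nrm x + nrm y)"

coinductive smooth_fun :: "('a::real_normed_vector \<Rightarrow> real) \<Rightarrow> bool" where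
  "continuous_on UNIV f \<Longrightarrow> (\<forall>x. f differentiable (at x)) \<Longrightarrow>
   (\<forall>v. smooth_fun (\<lambda>x. frechet_derivative f (at x) v)) \<Longrightarrow> smooth_fun f"

definition mollifier :: "('a::euclidean_space \<Rightarrow> real) \<Rightarrow> bool" where
  "mollifier \<eta> \<longleftrightarrow> smooth_fun \<eta> \<and> (\<forall>x. 0 \<le> \<eta> x) \<and> (\<forall>x. 1 < norm x \<longrightarrow> \<eta> x = 0) \<and>
     integrable lborel \<eta> \<and> integral\<^sup>L lborel \<eta> = 1"

definition mollify :: "('a::euclidean_space \<Rightarrow> real) \<Rightarrow> real \<Rightarrow> 'a \<Rightarrow> real" where
  "mollify \<eta> \<epsilon> x = (1 / \<epsilon>) ^ DIM('a) * \<eta> ((1 / \<epsilon>) *\<^sub>R x)"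

definition recession :: "('a::real_vector \<Rightarrow> real) \<Rightarrow> 'a \<Rightarrow> real" where
  "recession G M = Lim (at_right 0) (\<lambda>\<mu>. \<mu> * G ((1 / \<mu>) *\<^sub>R M))"

definition recession_exists :: "('a::real_vector \<Rightarrow> real) \<Rightarrow> 'a set \<Rightarrow> bool" where
  "recession_exists G S \<longleftrightarrow>
     (\<forall>M\<in>S. \<exists>L. ((\<lambda>\<mu>. \<mu> * G ((1 / \<mu>) *\<^sub>R M)) \<longlongrightarrow> L) (at_right 0))"

text \<open>F_eps(M) = int F(M - Q) eta_eps(Q) dQ, with S(d) identified with R^(d*) via iota.\<close>
definition mollified :: "('m::euclidean_space \<Rightarrow> real^'n^'n) \<Rightarrow> ('m \<Rightarrow> real) \<Rightarrow> real
     \<Rightarrow> (real^'n^'n \<Rightarrow> real) \<Rightarrow> real^'n^'n \<Rightarrow> real" where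
  "mollified \<iota> \<eta> \<epsilon> F M = integral\<^sup>L lborel (\<lambda>Q. F (M - \<iota> Q) * mollify \<eta> \<epsilon> Q)"

end

theory Submission imports Defs begin

lemma sym_add: "A \<in> sym_mats \<Longrightarrow> B \<in> sym_mats \<Longrightarrow> A + B \<in> sym_mats"
  unfolding sym_mats_def transpose_def by (auto simp: vec_eq_iff)
lemma sym_diff: "A \<in> sym_mats \<Longrightarrow> B \<in> sym_mats \<Longrightarrow> A - B \<in> sym_mats"
  unfolding sym_mats_def transpose_def by (auto simp: vec_eq_iff)
lemma sym_scale: "A \<in> sym_mats \<Longrightarrow> c *\<^sub>R A \<in> sym_mats"
  unfolding sym_mats_def by (simp add: transpose_scalar)
lemma sym_id: "mat 1 \<in> sym_mats"
  unfolding sym_mats_def by simp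
lemma sym_sum: "finite S \<Longrightarrow> (\<And>i. i \<in> S \<Longrightarrow> f i \<in> sym_mats) \<Longrightarrow> sum f S \<in> sym_mats"
proof (induction S rule: finite_induct)
  case empty show ?case unfolding sym_mats_def transpose_def by (simp add: vec_eq_iff)
next
  case (insert x F) then show ?case by (auto intro: sym_add)
qed

lemma scaled_id_mult: "((s::real) *\<^sub>R mat 1) *v x = s *\<^sub>R (x::real^'n)"
proof -
  have "(\<Sum>j\<in>UNIV. s * (if i = j then 1 else 0) * (x $ j)) = s * x $ i" for i
  proof -
    have "(\<Sum>j\<in>UNIV. s * (if i = j then 1 else 0) * (x $ j)) = (\<Sum>j\<in>UNIV. if i = j then s * x $ j else 0)"
      by (rule sum.cong) auto
    then show ?thesis by simp
  qed
  then show ?thesis by (simp add: vec_eq_iff matrix_vector_mult_def mat_def)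
qed

lemma psd_scaled_id: "0 \<le> s \<Longrightarrow> psd ((s::real) *\<^sub>R (mat 1 :: real^'n^'n))"
  unfolding psd_def by (simp add: scaled_id_mult)

lemma quad_bound: "\<bar>x \<bullet> ((A::real^'n^'n) *v x)\<bar> \<le> real CARD('n) * real CARD('n) * norm A * norm x * norm x"
proof -
  have o: "onorm ((*v) A) \<le> real CARD('n) * real CARD('n) * norm A"
    by (rule onorm_le_matrix_component) (metis component_le_norm_cart Finite_Cartesian_Product.norm_nth_le order_trans)
  have "norm (A *v x) \<le> onorm ((*v) A) * norm x"
    by (rule onorm) (simp add: linear_linear[symmetric])
  also have "\<dots> \<le> real CARD('n) * real CARD('n) * norm A * norm x"
    using o by (simp add: mult_right_mono)
  finally have n: "norm (A *v x) \<le> real CARD('n) * real CARD('n) * norm A * norm x" .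
  have "\<bar>x \<bullet> (A *v x)\<bar> \<le> norm x * norm (A *v x)" by (rule Cauchy_Schwarz_ineq2)
  also have "\<dots> \<le> norm x * (real CARD('n) * real CARD('n) * norm A * norm x)"
    using n by (simp add: mult_left_mono)
  finally show ?thesis by (simp add: ac_simps)
qed

lemma psd_shift: "psd (s *\<^sub>R mat 1 + (A::real^'n^'n))" if "real CARD('n) * real CARD('n) * norm A \<le> s"
  unfolding psd_def
proof
  fix x :: "real^'n"
  have "x \<bullet> ((s *\<^sub>R mat 1 + A) *v x) = s * (norm x * norm x) + x \<bullet> (A *v x)"
    by (simp add: matrix_vector_mult_add_rdistrib scaled_id_mult inner_add_right power2_norm_eq_inner[symmetric] power2_eq_square)
  moreover have "real CARD('n) * real CARD('n) * norm A * (norm x * norm x) \<le> s * (norm x * norm x)"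
    using that by (simp add: mult_right_mono)
  ultimately show "0 \<le> x \<bullet> ((s *\<^sub>R mat 1 + A) *v x)"
    using quad_bound[of x A] by (simp add: ac_simps)
qed

lemma nrm_zero: "is_norm_on sym_mats nrm \<Longrightarrow> nrm 0 = 0"
  using sym_scale[OF sym_id, of 0] unfolding is_norm_on_def by auto

lemma nrm_sum:
  assumes nrm: "is_norm_on sym_mats nrm" and "finite S" and "\<And>i. i \<in> S \<Longrightarrow> f i \<in> sym_mats"
  shows "nrm (sum f S) \<le> (\<Sum>i\<in>S. nrm (f i))"
  using assms(2,3)
proof (induction S rule: finite_induct)
  case empty then show ?case using nrm_zero[OF nrm] by simp
next
  case (insert x S)
  have "nrm (f x + sum f S) \<le> nrm (f x) + nrm (sum f S)"
    using nrm insert sym_sum[of S f] unfolding is_norm_on_def by auto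
  then show ?case using insert by simp
qed

lemma nrm_iota_bound:
  fixes \<iota> :: "'m::euclidean_space \<Rightarrow> real^'n^'n"
  assumes lin: "linear \<iota>" and rng: "range \<iota> = sym_mats" and nrm: "is_norm_on sym_mats nrm"
  shows "\<exists>C\<ge>0. \<forall>R. nrm (\<iota> R) \<le> C * norm R"
proof (intro exI[of _ "\<Sum>b\<in>Basis. nrm (\<iota> b)"] conjI allI)
  have ib: "\<iota> x \<in> sym_mats" for x using rng by auto
  show "0 \<le> (\<Sum>b\<in>Basis. nrm (\<iota> b))"
    using nrm ib unfolding is_norm_on_def by (auto intro: sum_nonneg)
  fix R :: 'm
  have "\<iota> R = \<iota> (\<Sum>b\<in>Basis. (R \<bullet> b) *\<^sub>R b)" by (simp add: euclidean_representation)
  also have "\<dots> = (\<Sum>b\<in>Basis. (R \<bullet> b) *\<^sub>R \<iota> b)"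
    using lin by (simp add: linear_sum linear_scale)
  finally have eq: "\<iota> R = (\<Sum>b\<in>Basis. (R \<bullet> b) *\<^sub>R \<iota> b)" .
  have "nrm (\<iota> R) \<le> (\<Sum>b\<in>Basis. nrm ((R \<bullet> b) *\<^sub>R \<iota> b))"
    unfolding eq by (rule nrm_sum[OF nrm]) (auto intro: sym_scale ib)
  also have "\<dots> = (\<Sum>b\<in>Basis. \<bar>R \<bullet> b\<bar> * nrm (\<iota> b))"
    using nrm ib unfolding is_norm_on_def by auto
  also have "\<dots> \<le> (\<Sum>b\<in>Basis. norm R * nrm (\<iota> b))"
    apply (rule sum_mono)
    apply (rule mult_right_mono)
    using nrm ib unfolding is_norm_on_def by (auto simp: Basis_le_norm)
  finally show "nrm (\<iota> R) \<le> (\<Sum>b\<in>Basis. nrm (\<iota> b)) * norm R"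
    by (simp add: sum_distrib_left mult.commute)
qed

lemma F_lipschitz:
  fixes F :: "real^'n^'n \<Rightarrow> real" and \<iota> :: "'m::euclidean_space \<Rightarrow> real^'n^'n"
  assumes lin: "linear \<iota>" and rng: "range \<iota> = sym_mats" and nrm: "is_norm_on sym_mats nrm"
    and lam: "0 < lam" "lam \<le> Lam"
    and ellip: "\<And>M N. M \<in> sym_mats \<Longrightarrow> N \<in> sym_mats \<Longrightarrow> psd N \<Longrightarrow>
        lam * nrm N \<le> F (M + N) - F M \<and> F (M + N) - F M \<le> Lam * nrm N"
  shows "\<exists>K\<ge>0. \<forall>B\<in>sym_mats. \<forall>R. \<bar>F (B + \<iota> R) - F B\<bar> \<le> K * norm R"
proof -
  obtain C where C: "C \<ge> 0" "\<And>R. nrm (\<iota> R) \<le> C * norm R"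
    using nrm_iota_bound[OF lin rng nrm] by blast
  obtain Bi where Bi: "Bi > 0" "\<And>R. norm (\<iota> R) \<le> Bi * norm R"
    using linear_bounded_pos[OF lin] by blast
  define c2 where "c2 = real CARD('n) * real CARD('n)"
  define nI where "nI = nrm (mat 1 :: real^'n^'n)"
  have nI: "0 \<le> nI" using nrm sym_id unfolding nI_def is_norm_on_def by auto
  have c2: "0 \<le> c2" unfolding c2_def by simp
  have ib: "\<iota> x \<in> sym_mats" for x using rng by auto
  show ?thesis
  proof (intro exI[of _ "Lam * (c2 * Bi * nI + C)"] conjI ballI allI)
    show "0 \<le> Lam * (c2 * Bi * nI + C)"
      using lam Bi C nI c2 by simp
    fix B :: "real^'n^'n" and R assume B: "B \<in> sym_mats"
    define N where "N = \<iota> R"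
    define s where "s = c2 * norm N"
    have s: "0 \<le> s" unfolding s_def using c2 by simp
    have N: "N \<in> sym_mats" unfolding N_def by (rule ib)
    have sI: "s *\<^sub>R mat 1 \<in> sym_mats" by (rule sym_scale[OF sym_id])
    have P: "s *\<^sub>R mat 1 + N \<in> sym_mats" by (rule sym_add[OF sI N])
    have psdP: "psd (s *\<^sub>R mat 1 + N)" by (rule psd_shift) (simp add: s_def c2_def)
    have nsI: "nrm (s *\<^sub>R mat 1) = s * nI"
      using nrm sym_id s unfolding is_norm_on_def nI_def by auto
    have nP: "nrm (s *\<^sub>R mat 1 + N) \<le> s * nI + nrm N"
      using nrm sI N nsI unfolding is_norm_on_def by metis
    have nP0: "0 \<le> nrm (s *\<^sub>R mat 1 + N)"
      using nrm P unfolding is_norm_on_def by auto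
    have e1: "lam * nrm (s *\<^sub>R mat 1 + N) \<le> F (B + (s *\<^sub>R mat 1 + N)) - F B \<and>
        F (B + (s *\<^sub>R mat 1 + N)) - F B \<le> Lam * nrm (s *\<^sub>R mat 1 + N)"
      by (rule ellip[OF B P psdP])
    have e2: "lam * nrm (s *\<^sub>R mat 1) \<le> F ((B + N) + s *\<^sub>R mat 1) - F (B + N) \<and>
        F ((B + N) + s *\<^sub>R mat 1) - F (B + N) \<le> Lam * nrm (s *\<^sub>R mat 1)"
      by (rule ellip[OF sym_add[OF B N] sI psd_scaled_id[OF s]])
    have eq: "B + (s *\<^sub>R mat 1 + N) = (B + N) + s *\<^sub>R mat 1" by (simp add: algebra_simps)
    have a1: "lam * nrm (s *\<^sub>R mat 1 + N) \<le> Lam * nrm (s *\<^sub>R mat 1 + N)"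
      using lam nP0 by (simp add: mult_right_mono)
    have a2: "0 \<le> lam * (s * nI)" using lam s nI by simp
    have "\<bar>F (B + N) - F B\<bar> \<le> Lam * (s * nI + nrm N)"
    proof -
      have "Lam * nrm (s *\<^sub>R mat 1 + N) \<le> Lam * (s * nI + nrm N)"
        using nP lam by (simp add: mult_left_mono)
      moreover have "0 \<le> lam * nrm (s *\<^sub>R mat 1 + N)" using lam nP0 by simp
      moreover have "0 \<le> Lam * nrm N" using lam nrm N unfolding is_norm_on_def by auto
      ultimately show ?thesis using e1 e2 eq nsI a2 by (simp add: algebra_simps abs_le_iff)
    qed
    also have "\<dots> \<le> Lam * (c2 * Bi * nI + C) * norm R"
    proof -
      have "s * nI \<le> c2 * Bi * norm R * nI"
        unfolding s_def N_def using mult_right_mono[OF mult_left_mono[OF Bi(2)[of R] c2] nI] by (simp add: mult.assoc)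
      moreover have "nrm N \<le> C * norm R" unfolding N_def by (rule C(2))
      ultimately have "s * nI + nrm N \<le> (c2 * Bi * nI + C) * norm R" by (simp add: algebra_simps)
      then show ?thesis using lam by (simp add: mult_left_mono mult.assoc)
    qed
    finally show "\<bar>F (B + \<iota> R) - F B\<bar> \<le> Lam * (c2 * Bi * nI + C) * norm R"
      unfolding N_def .
  qed
qed

theorem proposition3p2:
  fixes F :: "real^'n^'n \<Rightarrow> real"
    and nrm :: "real^'n^'n \<Rightarrow> real"
    and \<iota> :: "'m::euclidean_space \<Rightarrow> real^'n^'n"
    and \<eta> :: "'m \<Rightarrow> real"
    and lam Lam :: real and eps :: real
  assumes dim: "DIM('m) = CARD('n) * (CARD('n) + 1) div 2"
    and iota_lin: "linear \<iota>" and iota_inj: "inj \<iota>" and iota_range: "range \<iota> = sym_mats"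
    and nrm: "is_norm_on sym_mats nrm"
    and moll: "mollifier \<eta>"
    and lam_pos: "0 < lam" "lam \<le> Lam"
    and ellip: "\<And>M N. M \<in> sym_mats \<Longrightarrow> N \<in> sym_mats \<Longrightarrow> psd N \<Longrightarrow>
        lam * nrm N \<le> F (M + N) - F M \<and> F (M + N) - F M \<le> Lam * nrm N"
    and F0: "F 0 = 0"
    and rec_ex: "recession_exists F sym_mats"
    and rec_cvx: "convex_on sym_mats (recession F)"
    and eps_pos: "0 < eps"
  shows "recession_exists (mollified \<iota> \<eta> eps F) sym_mats
       \<and> convex_on sym_mats (recession (mollified \<iota> \<eta> eps F))"
proof -
  obtain K where K: "K \<ge> 0" "\<And>B R. B \<in> sym_mats \<Longrightarrow> \<bar>F (B + \<iota> R) - F B\<bar> \<le> K * norm R"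
    using F_lipschitz[OF iota_lin iota_range nrm lam_pos ellip] by blast
  define e where "e = mollify \<eta> eps"
  have eta_cont: "continuous_on UNIV \<eta>"
    using moll unfolding mollifier_def by (auto elim: smooth_fun.cases)
  have e_cont: "continuous_on UNIV e"
    unfolding e_def mollify_def[abs_def]
  proof -
    have "continuous_on UNIV (\<lambda>x::'m. \<eta> ((1 / eps) *\<^sub>R x))"
      by (rule continuous_on_compose2[OF eta_cont]) (auto intro: continuous_on_scaleR continuous_on_const continuous_on_id)
    then show "continuous_on UNIV (\<lambda>x::'m. (1 / eps) ^ DIM('m) * \<eta> ((1 / eps) *\<^sub>R x))"
      by (intro continuous_on_mult continuous_on_const)
  qed
  have e_nonneg: "0 \<le> e Q" for Q
    using moll eps_pos unfolding e_def mollify_def mollifier_def by auto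
  have e_supp: "e Q = 0" if "Q \<notin> cball 0 eps" for Q
  proof -
    have "1 < norm ((1 / eps) *\<^sub>R Q)" using that eps_pos by (simp add: field_simps)
    then show ?thesis using moll unfolding e_def mollify_def mollifier_def by auto
  qed
  have integ: "integrable lborel (\<lambda>Q. g Q * e Q)" if "continuous_on UNIV g" for g :: "'m \<Rightarrow> real"
  proof -
    have "integrable lborel (\<lambda>x. indicator (cball (0::'m) eps) x *\<^sub>R (g x * e x))"
      by (rule borel_integrable_compact[OF compact_cball])
        (rule continuous_on_subset[OF continuous_on_mult[OF that e_cont] subset_UNIV])
    moreover have "(\<lambda>x. indicator (cball (0::'m) eps) x *\<^sub>R (g x * e x)) = (\<lambda>Q. g Q * e Q)"
      by (rule ext) (use e_supp in \<open>auto simp: indicator_def\<close>)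
    ultimately show ?thesis by metis
  qed
  have ib: "\<iota> x \<in> sym_mats" for x using iota_range by auto
  have Fcont: "continuous_on UNIV (\<lambda>Q. F (A - \<iota> Q))" if A: "A \<in> sym_mats" for A
  proof (rule lipschitz_on_continuous_on[of K])
    show "K-lipschitz_on UNIV (\<lambda>Q. F (A - \<iota> Q))"
    proof (rule lipschitz_onI)
      fix x y :: 'm
      have eq: "A - \<iota> y + \<iota> (y - x) = A - \<iota> x" using iota_lin by (simp add: linear_diff)
      have "\<bar>F (A - \<iota> y + \<iota> (y - x)) - F (A - \<iota> y)\<bar> \<le> K * norm (y - x)"
        by (rule K(2)[OF sym_diff[OF A ib]])
      then have "\<bar>F (A - \<iota> x) - F (A - \<iota> y)\<bar> \<le> K * norm (y - x)"
        unfolding eq .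
      then show "dist (F (A - \<iota> x)) (F (A - \<iota> y)) \<le> K * dist x y"
        by (simp add: dist_real_def dist_norm norm_minus_commute)
    qed (rule K(1))
  qed
  define c where "c = integral\<^sup>L lborel e"
  define Cn where "Cn = integral\<^sup>L lborel (\<lambda>Q. norm Q * e Q)"
  have c_nonneg: "0 \<le> c" unfolding c_def using e_nonneg by simp
  have ie: "integrable lborel e" using integ[of "\<lambda>_. 1"] by simp
  have iN: "integrable lborel (\<lambda>Q. norm Q * e Q)" by (rule integ) (intro continuous_intros)
  let ?Fe = "mollified \<iota> \<eta> eps F"
  have key: "\<bar>?Fe A - c * F A\<bar> \<le> K * Cn" if A: "A \<in> sym_mats" for A
  proof -
    have i1: "integrable lborel (\<lambda>Q. F (A - \<iota> Q) * e Q)" by (rule integ[OF Fcont[OF A]])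
    have i2: "integrable lborel (\<lambda>Q. F A * e Q)" using ie by simp
    have "?Fe A - c * F A = integral\<^sup>L lborel (\<lambda>Q. F (A - \<iota> Q) * e Q - F A * e Q)"
      unfolding mollified_def e_def[symmetric] c_def using i1 i2 by (simp add: mult.commute)
    also have "\<bar>\<dots>\<bar> \<le> integral\<^sup>L lborel (\<lambda>Q. K * (norm Q * e Q))"
    proof -
      have b: "norm (F (A - \<iota> Q) * e Q - F A * e Q) \<le> K * (norm Q * e Q)" for Q :: 'm
      proof -
        have "A + \<iota> (- Q) = A - \<iota> Q" using iota_lin by (simp add: linear_neg)
        then have "\<bar>F (A - \<iota> Q) - F A\<bar> \<le> K * norm Q" using K(2)[OF A, of "-Q"] by simp
        then have "\<bar>F (A - \<iota> Q) - F A\<bar> * e Q \<le> K * norm Q * e Q"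
          using e_nonneg by (simp add: mult_right_mono)
        then show ?thesis
          using e_nonneg[of Q] by (simp add: left_diff_distrib[symmetric] abs_mult mult.assoc)
      qed
      have "norm (integral\<^sup>L lborel (\<lambda>Q. F (A - \<iota> Q) * e Q - F A * e Q)) \<le> integral\<^sup>L lborel (\<lambda>Q. K * (norm Q * e Q))"
        by (rule Bochner_Integration.integral_norm_bound_integral) (use i1 i2 iN b in auto)
      then show ?thesis by simp
    qed
    also have "\<dots> = K * Cn" unfolding Cn_def by simp
    finally show ?thesis .
  qed
  have lim: "((\<lambda>\<mu>. \<mu> * ?Fe ((1 / \<mu>) *\<^sub>R M)) \<longlongrightarrow> c * recession F M) (at_right 0)"
    if M: "M \<in> sym_mats" for M
  proof -
    obtain L where L: "((\<lambda>\<mu>. \<mu> * F ((1 / \<mu>) *\<^sub>R M)) \<longlongrightarrow> L) (at_right 0)"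
      using rec_ex M unfolding recession_exists_def by blast
    have recL: "recession F M = L" unfolding recession_def using L by (rule tendsto_Lim[rotated]) simp
    let ?D = "\<lambda>\<mu>. \<mu> * ?Fe ((1 / \<mu>) *\<^sub>R M) - c * (\<mu> * F ((1 / \<mu>) *\<^sub>R M))"
    have "(?D \<longlongrightarrow> 0) (at_right 0)"
    proof (rule Lim_null_comparison)
      show "\<forall>\<^sub>F \<mu> in at_right 0. norm (?D \<mu>) \<le> \<mu> * (K * Cn)"
        using eventually_at_right_less[of "0::real"]
      proof (rule eventually_mono)
        fix \<mu> :: real assume "0 < \<mu>"
        have "?D \<mu> = \<mu> * (?Fe ((1 / \<mu>) *\<^sub>R M) - c * F ((1 / \<mu>) *\<^sub>R M))" by (simp add: algebra_simps)
        then have "\<bar>?D \<mu>\<bar> = \<mu> * \<bar>?Fe ((1 / \<mu>) *\<^sub>R M) - c * F ((1 / \<mu>) *\<^sub>R M)\<bar>"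
          using \<open>0 < \<mu>\<close> by (simp add: abs_mult)
        also have "\<dots> \<le> \<mu> * (K * Cn)"
          using key[OF sym_scale[OF M]] \<open>0 < \<mu>\<close> by (simp add: mult_left_mono)
        finally show "norm (?D \<mu>) \<le> \<mu> * (K * Cn)" by simp
      qed
      show "((\<lambda>\<mu>. \<mu> * (K * Cn)) \<longlongrightarrow> 0) (at_right 0)"
      proof -
        have "((\<lambda>\<mu>::real. \<mu>) \<longlongrightarrow> 0) (at_right 0)" by (rule tendsto_ident_at)
        from tendsto_mult[OF this tendsto_const[of "K * Cn"]] show ?thesis by simp
      qed
    qed
    then have "((\<lambda>\<mu>. ?D \<mu> + c * (\<mu> * F ((1 / \<mu>) *\<^sub>R M))) \<longlongrightarrow> 0 + c * L) (at_right 0)"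
      by (intro tendsto_add tendsto_mult_left L)
    then show ?thesis using recL by simp
  qed
  have recFe: "recession ?Fe M = c * recession F M" if M: "M \<in> sym_mats" for M
    unfolding recession_def[of ?Fe] using lim[OF M] by (rule tendsto_Lim[rotated]) simp
  have ex: "recession_exists ?Fe sym_mats"
    unfolding recession_exists_def using lim by blast
  have cv: "convex_on sym_mats (\<lambda>M. c * recession F M)"
    by (rule convex_on_cmul[OF c_nonneg rec_cvx])
  have "convex_on sym_mats (recession ?Fe)"
  proof (rule convex_onI)
    show "convex sym_mats" unfolding convex_def by (blast intro: sym_add sym_scale)
    fix t :: real and x y :: "real^'n^'n" assume t: "0 < t" "t < 1" and xy: "x \<in> sym_mats" "y \<in> sym_mats"
    have mem: "(1 - t) *\<^sub>R x + t *\<^sub>R y \<in> sym_mats" by (intro sym_add sym_scale xy)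
    have "c * recession F ((1 - t) *\<^sub>R x + t *\<^sub>R y) \<le> (1 - t) * (c * recession F x) + t * (c * recession F y)"
      by (rule convex_onD[OF cv]) (use t xy in auto)
    then show "recession ?Fe ((1 - t) *\<^sub>R x + t *\<^sub>R y) \<le> (1 - t) * recession ?Fe x + t * recession ?Fe y"
      by (simp add: recFe[OF mem] recFe[OF xy(1)] recFe[OF xy(2)])
  qed
  with ex show ?thesis by blast
qed
end
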